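(* Let $G=\mathrm{GL}_n$ over a field $k$, acting on $G/Q$ by left multiplication. (i) If $i\in\{2,\dots,n\}$ and $g\in X_i$, then $T_1\subseteq\mathrm{Stab}_T(g)$. (ii) If $j\in\{2,\dots,n\}$ and $g\in X_{1j}$, then $T_j\subseteq\mathrm{Stab}_T(g)$. (iii) $\mathrm{Stab}_T(\mathring g)=\{1\}$.
   Context: $T$ is the diagonal torus, $B$ the upper triangular Borel, $U$ its unipotent radical, $Q$ the mirabolic subgroup of matrices whose last row is $(0,\dots,0,1)$. For $1\le j\le n$, $T_j=\{\mathrm{diag}(1,\dots,1,t_j,1,\dots,1): t_j\in k^\times\}$ (entry $t_j$ in position $j$). For $1\le i\le n$, $w_i$ is the permutation matrix of the transposition $(i\,n)$ (so $w_n=1$), and $X_i=Bw_iQ/Q$; then $G/Q=\bigsqcup_i X_i$. $E_{ij}$ are the elementary matrices, $U_{\alpha_{1j}}=\{\exp(aE_{1j})=1+aE_{1j}\}$. One has $X_1=T\big(\prod_{j=2}^nU_{\alpha_{1j}}\big)w_1Q/Q$; for $2\le j\le n$, $X_{1j}\subset X_1$ is the closed subscheme of elements whose $U_{\alpha_{1j}}$-component is trivial. Finally $\mathring g=\exp\big(\sum_{j=2}^nE_{1j}\big)w_1Q\in X_1$. *)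

theory Defs
  imports "Jordan_Normal_Form.Matrix"
begin

(* Conventions: n x n matrices over a field 'k, rows/columns indexed 0..n-1.
   Paper index i (1..n) corresponds to matrix index i-1. *)

definition GLn :: "nat \<Rightarrow> 'k::field mat set" where
  "GLn n = {A \<in> carrier_mat n n. invertible_mat A}"

definition torus :: "nat \<Rightarrow> 'k::field mat set" where
  "torus n = {A \<in> GLn n. diagonal_mat A}"

definition borel :: "nat \<Rightarrow> 'k::field mat set" where
  "borel n = {A \<in> GLn n. upper_triangular A}"

definition mirabolic :: "nat \<Rightarrow> 'k::field mat set" where
  "mirabolic n = {A \<in> GLn n. \<forall>c<n. A $$ (n - 1, c) = (if c = n - 1 then 1 else 0)}"

definition torus_j :: "nat \<Rightarrow> nat \<Rightarrow> 'k::field mat set" where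
  "torus_j n j = {mat n n (\<lambda>(r,c). if r = c then (if r = j - 1 then t else 1) else 0) | t. t \<noteq> 0}"

definition swap_idx :: "nat \<Rightarrow> nat \<Rightarrow> nat \<Rightarrow> nat" where
  "swap_idx a b x = (if x = a then b else if x = b then a else x)"

definition w_perm :: "nat \<Rightarrow> nat \<Rightarrow> 'k::field mat" where
  "w_perm n i = mat n n (\<lambda>(r,c). if r = swap_idx (i - 1) (n - 1) c then 1 else 0)"

definition lcoset :: "nat \<Rightarrow> 'k::field mat \<Rightarrow> 'k mat set" where
  "lcoset n g = (\<lambda>q. g * q) ` mirabolic n"

definition GmodQ :: "nat \<Rightarrow> 'k::field mat set set" where
  "GmodQ n = lcoset n ` GLn n"

definition act :: "'k::field mat \<Rightarrow> 'k mat set \<Rightarrow> 'k mat set" where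
  "act t x = (\<lambda>y. t * y) ` x"

definition stab_T :: "nat \<Rightarrow> 'k::field mat set \<Rightarrow> 'k mat set" where
  "stab_T n x = {t \<in> torus n. act t x = x}"

definition X_cell :: "nat \<Rightarrow> nat \<Rightarrow> 'k::field mat set set" where
  "X_cell n i = {lcoset n (b * w_perm n i) | b. b \<in> borel n}"

(* prod_{j=2}^n U_{alpha_{1j}}: the element prod_j (1 + a_j E_{1j}) = 1 + sum_j a_j E_{1j};
   a c is the coefficient at paper index j = c+1 *)
definition u_first_row :: "nat \<Rightarrow> (nat \<Rightarrow> 'k::field) \<Rightarrow> 'k mat" where
  "u_first_row n a = 1\<^sub>m n + mat n n (\<lambda>(r,c). if r = 0 \<and> 1 \<le> c then a c else 0)"

definition X1j :: "nat \<Rightarrow> nat \<Rightarrow> 'k::field mat set set" where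
  "X1j n j = {lcoset n (t * u_first_row n a * w_perm n 1) | t a. t \<in> torus n \<and> a (j - 1) = 0}"

(* ring g = exp(sum_{j=2}^n E_{1j}) w_1 Q; the exponential equals 1 + sum E_{1j} (square zero) *)
definition g_ring :: "nat \<Rightarrow> 'k::field mat set" where
  "g_ring n = lcoset n (u_first_row n (\<lambda>_. 1) * w_perm n 1)"

end

theory Submission
  imports Defs
begin


lemma mult_entry:
  assumes "A \<in> carrier_mat n m" "B \<in> carrier_mat m p" "i < n" "j < p"
  shows "(A * B) $$ (i,j) = (\<Sum>k<m. A $$ (i,k) * B $$ (k,j))"
  using assms by (auto simp: scalar_prod_def lessThan_atLeast0 intro!: sum.cong)

lemma sum_single:
  assumes "finite S" "c \<in> S" "\<And>k. k \<in> S \<Longrightarrow> k \<noteq> c \<Longrightarrow> f k = 0"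
  shows "sum f S = f c"
proof -
  have "sum f S = f c + sum f (S - {c})" using assms by (simp add: sum.remove)
  also have "sum f (S - {c}) = 0" using assms by (intro sum.neutral) auto
  finally show ?thesis by simp
qed

definition Pm :: "nat \<Rightarrow> 'k::field mat" where
  "Pm n = mat n n (\<lambda>(r,c). if r = n - 1 \<and> c = n - 1 then 1 else 0)"

lemma Pm_carrier[simp]: "Pm n \<in> carrier_mat n n" by (simp add: Pm_def)

lemma Pm_mult:
  assumes "A \<in> carrier_mat n n" "r < n" "c < n"
  shows "(Pm n * A) $$ (r,c) = (if r = n - 1 then A $$ (n-1,c) else 0)"
proof -
  have "(Pm n * A) $$ (r,c) = (\<Sum>k<n. Pm n $$ (r,k) * A $$ (k,c))"
    using assms by (intro mult_entry) auto
  also have "\<dots> = Pm n $$ (r,n-1) * A $$ (n-1,c)"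
    using assms by (intro sum_single) (auto simp: Pm_def)
  finally show ?thesis using assms by (auto simp: Pm_def)
qed

lemma mirab_iff:
  "q \<in> mirabolic n \<longleftrightarrow> q \<in> carrier_mat n n \<and> invertible_mat q \<and> Pm n * q = (Pm n :: 'k::field mat)"
proof
  assume q: "q \<in> mirabolic n"
  hence c: "q \<in> carrier_mat n n" "invertible_mat q" by (auto simp: mirabolic_def GLn_def)
  have "Pm n * q = Pm n"
  proof (rule eq_matI)
    fix i j assume "i < dim_row (Pm n :: 'k mat)" "j < dim_col (Pm n :: 'k mat)"
    hence ij: "i < n" "j < n" by (auto simp: Pm_def)
    have "(Pm n * q) $$ (i,j) = (if i = n-1 then q$$(n-1,j) else 0)" by (rule Pm_mult[OF c(1) ij])
    then show "(Pm n * q) $$ (i,j) = Pm n $$ (i,j)"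
      using q ij c by (auto simp: mirabolic_def Pm_def)
  qed (use c in \<open>auto simp: Pm_def\<close>)
  thus "q \<in> carrier_mat n n \<and> invertible_mat q \<and> Pm n * q = Pm n" using c by auto
next
  assume h: "q \<in> carrier_mat n n \<and> invertible_mat q \<and> Pm n * q = Pm n"
  have "q $$ (n-1,c) = (if c = n - 1 then 1 else 0)" if "c < n" for c
  proof -
    have "(Pm n * q) $$ (n-1,c) = Pm n $$ (n-1,c)" using h by simp
    thus ?thesis using Pm_mult[of q n "n-1" c] h that by (auto simp: Pm_def)
  qed
  thus "q \<in> mirabolic n" using h by (auto simp: mirabolic_def GLn_def)
qed

lemma massoc:
  assumes "A \<in> carrier_mat n n" "B \<in> carrier_mat n n" "C \<in> carrier_mat n n"
  shows "A * B * C = A * (B * C)"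
  using assms by (rule assoc_mult_mat)

lemma inv_intro:
  assumes "A \<in> carrier_mat n n" "B \<in> carrier_mat n n" "A * B = 1\<^sub>m n" "B * A = 1\<^sub>m n"
  shows "invertible_mat A"
  using assms unfolding invertible_mat_def inverts_mat_def by auto

lemma inv_get:
  assumes "invertible_mat A" "A \<in> carrier_mat n n"
  obtains B where "B \<in> carrier_mat n n" "A * B = 1\<^sub>m n" "B * A = 1\<^sub>m n"
proof -
  from assms obtain B where B: "A * B = 1\<^sub>m n" "B * A = 1\<^sub>m (dim_row B)"
    unfolding invertible_mat_def inverts_mat_def by auto
  have "dim_col B = n" using B(1) by (metis dim_col_mat(1) index_mult_mat(3) index_one_mat(3))
  moreover have "dim_row B = n" using B(2) assms(2)
    by (metis carrier_matD(2) index_mult_mat(3) index_one_mat(3))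
  ultimately have "B \<in> carrier_mat n n" by auto
  thus ?thesis using that B \<open>dim_row B = n\<close> by auto
qed

lemma inv_mult:
  assumes "A \<in> carrier_mat n n" "B \<in> carrier_mat n n" "invertible_mat A" "invertible_mat B"
  shows "invertible_mat (A * B)"
proof -
  obtain Ai where Ai: "Ai \<in> carrier_mat n n" "A * Ai = 1\<^sub>m n" "Ai * A = 1\<^sub>m n" using inv_get assms by metis
  obtain Bi where Bi: "Bi \<in> carrier_mat n n" "B * Bi = 1\<^sub>m n" "Bi * B = 1\<^sub>m n" using inv_get assms by metis
  have "(A * B) * (Bi * Ai) = A * (B * (Bi * Ai))" using assms Ai Bi by (metis massoc mult_carrier_mat)
  also have "B * (Bi * Ai) = (B * Bi) * Ai" using assms Ai Bi by (metis massoc mult_carrier_mat)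
  also have "A * ((B * Bi) * Ai) = 1\<^sub>m n" unfolding Bi(2) using Ai assms by simp
  finally have 1: "(A * B) * (Bi * Ai) = 1\<^sub>m n" .
  have "(Bi * Ai) * (A * B) = Bi * (Ai * (A * B))" using assms Ai Bi by (metis massoc mult_carrier_mat)
  also have "Ai * (A * B) = (Ai * A) * B" using assms Ai Bi by (metis massoc mult_carrier_mat)
  also have "Bi * ((Ai * A) * B) = 1\<^sub>m n" unfolding Ai(3) using Bi assms by simp
  finally have 2: "(Bi * Ai) * (A * B) = 1\<^sub>m n" .
  show ?thesis using 1 2 assms Ai Bi by (intro inv_intro[of _ n "Bi * Ai"]) auto
qed



lemma Pm_dim[simp]: "dim_row (Pm n) = n" "dim_col (Pm n) = n" by (auto simp: Pm_def)

lemma sub_stab: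
  fixes g gi s :: "'k::field mat"
  assumes c: "g \<in> carrier_mat n n" "gi \<in> carrier_mat n n" "s \<in> carrier_mat n n"
    and gg: "g * gi = 1\<^sub>m n" "gi * g = 1\<^sub>m n" and si: "invertible_mat s"
    and P: "Pm n * gi * s = Pm n * gi" and y: "y \<in> lcoset n g"
  shows "s * y \<in> lcoset n g"
proof -
  obtain q where q: "q \<in> mirabolic n" "y = g * q" using y by (auto simp: lcoset_def)
  have qc: "q \<in> carrier_mat n n" "invertible_mat q" "Pm n * q = Pm n" using q mirab_iff by auto
  have gq: "g * q \<in> carrier_mat n n" using c qc by simp
  have sgq: "s * (g * q) \<in> carrier_mat n n" using c gq by simp
  define q' where "q' = gi * (s * (g * q))"
  have q'c: "q' \<in> carrier_mat n n" unfolding q'_def using c sgq by simp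
  have ig: "invertible_mat g" "invertible_mat gi" using inv_intro c gg by metis+
  have "invertible_mat q'" unfolding q'_def using c qc ig si gq sgq
    by (intro inv_mult) (auto intro: inv_mult)
  moreover have "Pm n * q' = Pm n"
  proof -
    have Pgi: "Pm n * gi \<in> carrier_mat n n" using mult_carrier_mat[OF Pm_carrier c(2)] .
    have "Pm n * q' = (Pm n * gi) * (s * (g * q))" unfolding q'_def
      using massoc[OF Pm_carrier c(2) sgq] by simp
    also have "\<dots> = (Pm n * gi * s) * (g * q)"
      using massoc[OF Pgi c(3) gq] by simp
    also have "\<dots> = (Pm n * gi) * (g * q)" using P by simp
    also have "\<dots> = Pm n * (gi * g) * q"
      using massoc[OF Pgi c(1) qc(1)] massoc[OF Pm_carrier c(2,1)] by simp
    also have "\<dots> = Pm n" using gg qc by simp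
    finally show ?thesis .
  qed
  ultimately have m: "q' \<in> mirabolic n" using q'c mirab_iff by blast
  have e: "g * q' = s * y"
  proof -
    have "g * q' = (g * gi) * (s * (g * q))" unfolding q'_def
      using massoc[OF c(1,2) sgq] by simp
    thus ?thesis using gg left_mult_one_mat[OF sgq] q by simp
  qed
  show ?thesis unfolding lcoset_def using image_eqI[of "s * y" "(*) g" q', OF e[symmetric] m] .
qed

lemma core:
  fixes g gi t :: "'k::field mat"
  assumes c: "g \<in> carrier_mat n n" "gi \<in> carrier_mat n n" "t \<in> carrier_mat n n"
    and gg: "g * gi = 1\<^sub>m n" "gi * g = 1\<^sub>m n" and ti: "invertible_mat t"
  shows "act t (lcoset n g) = lcoset n g \<longleftrightarrow> Pm n * gi * t = Pm n * gi"
proof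
  assume a: "act t (lcoset n g) = lcoset n g"
  have "1\<^sub>m n \<in> mirabolic n" using mirab_iff[of "1\<^sub>m n" n] inv_intro[of "1\<^sub>m n" n "1\<^sub>m n"] by auto
  hence "g * 1\<^sub>m n \<in> lcoset n g" unfolding lcoset_def by blast
  hence "g \<in> lcoset n g" using c by simp
  hence "t * g \<in> lcoset n g" using a unfolding act_def by blast
  then obtain q where q: "q \<in> mirabolic n" "t * g = g * q" by (auto simp: lcoset_def)
  have qc: "q \<in> carrier_mat n n" "Pm n * q = Pm n" using q mirab_iff by auto
  have giq: "gi * t * g = q"
  proof -
    have "gi * t * g = gi * (t * g)" using massoc[OF c(2,3,1)] .
    also have "\<dots> = (gi * g) * q" using q massoc[OF c(2,1) qc(1)] by simp
    finally show ?thesis using gg qc by simp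
  qed
  have Pgi: "Pm n * gi \<in> carrier_mat n n" using mult_carrier_mat[OF Pm_carrier c(2)] .
  have Pgit: "Pm n * gi * t \<in> carrier_mat n n" using mult_carrier_mat[OF Pgi c(3)] .
  have "Pm n * gi * t = Pm n * gi * t * (g * gi)" using gg right_mult_one_mat[OF Pgit] by simp
  also have "\<dots> = Pm n * gi * t * g * gi" using massoc[OF Pgit c(1,2)] by simp
  also have "Pm n * gi * t * g = Pm n * (gi * t * g)"
    using massoc[OF Pgi c(3,1)] massoc[OF Pm_carrier c(2,3)] massoc[OF Pm_carrier _ c(1), of "gi * t"] c
    by simp
  also have "\<dots> = Pm n" using giq qc by simp
  finally show "Pm n * gi * t = Pm n * gi" .
next
  assume P: "Pm n * gi * t = Pm n * gi"
  obtain ti where tic: "ti \<in> carrier_mat n n" "t * ti = 1\<^sub>m n" "ti * t = 1\<^sub>m n" using inv_get ti c by metis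
  have tiinv: "invertible_mat ti" using inv_intro tic c by metis
  have Pgi: "Pm n * gi \<in> carrier_mat n n" using mult_carrier_mat[OF Pm_carrier c(2)] .
  have P2: "Pm n * gi * ti = Pm n * gi"
  proof -
    have "Pm n * gi * ti = Pm n * gi * t * ti" using P by simp
    also have "\<dots> = Pm n * gi * (t * ti)" using massoc[OF Pgi c(3) tic(1)] .
    finally show ?thesis using tic right_mult_one_mat[OF Pgi] by simp
  qed
  show "act t (lcoset n g) = lcoset n g"
  proof
    show "act t (lcoset n g) \<subseteq> lcoset n g" unfolding act_def
      using sub_stab[OF c gg ti P] by blast
    show "lcoset n g \<subseteq> act t (lcoset n g)"
    proof
      fix y assume y: "y \<in> lcoset n g"
      have m: "ti * y \<in> lcoset n g" using sub_stab[OF c(1,2) tic(1) gg tiinv P2 y] .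
      moreover have yc: "y \<in> carrier_mat n n" using y c unfolding lcoset_def mirabolic_def GLn_def by auto
      hence e: "t * (ti * y) = y" using tic massoc[OF c(3) tic(1) yc] by simp
      show "y \<in> act t (lcoset n g)" unfolding act_def using image_eqI[of y "(*) t" "ti * y", OF e[symmetric] m] .
    qed
  qed
qed



lemma diag_right:
  fixes A D :: "'k::field mat"
  assumes "A \<in> carrier_mat n n" "D \<in> carrier_mat n n" "diagonal_mat D" "r < n" "c < n"
  shows "(A * D) $$ (r,c) = A $$ (r,c) * D $$ (c,c)"
proof -
  have "(A * D) $$ (r,c) = (\<Sum>k<n. A $$ (r,k) * D $$ (k,c))" using assms by (intro mult_entry) auto
  also have "\<dots> = A $$ (r,c) * D $$ (c,c)"
    using assms by (intro sum_single) (auto simp: diagonal_mat_def)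
  finally show ?thesis .
qed

lemma Pm_cond_diag:
  fixes gi D :: "'k::field mat"
  assumes gi: "gi \<in> carrier_mat n n" and D: "D \<in> carrier_mat n n" "diagonal_mat D"
  shows "Pm n * gi * D = Pm n * gi \<longleftrightarrow> (\<forall>c<n. gi $$ (n-1,c) * D $$ (c,c) = gi $$ (n-1,c))"
proof -
  have Pgi: "Pm n * gi \<in> carrier_mat n n" using mult_carrier_mat[OF Pm_carrier gi] .
  have ent: "(Pm n * gi * D) $$ (r,c) = (if r = n - 1 then gi $$ (n-1,c) * D $$ (c,c) else 0)"
    if "r < n" "c < n" for r c
    using diag_right[OF Pgi D that] Pm_mult[OF gi that] by simp
  show ?thesis
  proof
    assume e: "Pm n * gi * D = Pm n * gi"
    show "\<forall>c<n. gi $$ (n-1,c) * D $$ (c,c) = gi $$ (n-1,c)"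
    proof (intro allI impI)
      fix c assume c: "c < n"
      hence "n - 1 < n" by simp
      from ent[OF this c] Pm_mult[OF gi this c] e show "gi $$ (n-1,c) * D $$ (c,c) = gi $$ (n-1,c)"
        by simp
    qed
  next
    assume h: "\<forall>c<n. gi $$ (n-1,c) * D $$ (c,c) = gi $$ (n-1,c)"
    show "Pm n * gi * D = Pm n * gi"
    proof (rule eq_matI)
      fix i j assume "i < dim_row (Pm n * gi)" "j < dim_col (Pm n * gi)"
      hence ij: "i < n" "j < n" using Pgi by auto
      show "(Pm n * gi * D) $$ (i,j) = (Pm n * gi) $$ (i,j)"
        using ent[OF ij] Pm_mult[OF gi ij] h ij by simp
    qed (use Pgi D in auto)
  qed
qed

lemma key:
  fixes G gi t :: "'k::field mat"
  assumes c: "G \<in> carrier_mat n n" "gi \<in> carrier_mat n n"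
    and gg: "G * gi = 1\<^sub>m n" "gi * G = 1\<^sub>m n" and t: "t \<in> torus n"
  shows "act t (lcoset n G) = lcoset n G \<longleftrightarrow> (\<forall>c<n. gi $$ (n-1,c) * t $$ (c,c) = gi $$ (n-1,c))"
proof -
  have tc: "t \<in> carrier_mat n n" "invertible_mat t" "diagonal_mat t"
    using t by (auto simp: torus_def GLn_def)
  show ?thesis using core[OF c tc(1) gg tc(2)] Pm_cond_diag[OF c(2) tc(1,3)] by simp
qed

definition dj :: "nat \<Rightarrow> nat \<Rightarrow> 'k::field \<Rightarrow> 'k mat" where
  "dj n j s = mat n n (\<lambda>(r,c). if r = c then (if r = j - 1 then s else 1) else 0)"

lemma torus_j_dj: "torus_j n j = {dj n j s | s. s \<noteq> 0}"
  by (simp add: torus_j_def dj_def)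

lemma dj_torus:
  assumes "(s::'k::field) \<noteq> 0"
  shows "dj n j s \<in> torus n"
proof -
  have c: "dj n j s \<in> carrier_mat n n" "dj n j (inverse s) \<in> carrier_mat n n" by (auto simp: dj_def)
  have d: "diagonal_mat (dj n j s)" "diagonal_mat (dj n j (inverse s))" by (auto simp: dj_def diagonal_mat_def)
  have "dj n j s * dj n j (inverse s) = 1\<^sub>m n"
  proof (rule eq_matI)
    fix r c assume "r < dim_row (1\<^sub>m n :: 'k mat)" "c < dim_col (1\<^sub>m n :: 'k mat)"
    hence rc: "r < n" "c < n" by auto
    show "(dj n j s * dj n j (inverse s)) $$ (r,c) = 1\<^sub>m n $$ (r,c)"
      using diag_right[OF c(1) c(2) d(2) rc] rc assms by (auto simp: dj_def)
  qed (use c in auto)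
  moreover have "dj n j (inverse s) * dj n j s = 1\<^sub>m n"
  proof (rule eq_matI)
    fix r c assume "r < dim_row (1\<^sub>m n :: 'k mat)" "c < dim_col (1\<^sub>m n :: 'k mat)"
    hence rc: "r < n" "c < n" by auto
    show "(dj n j (inverse s) * dj n j s) $$ (r,c) = 1\<^sub>m n $$ (r,c)"
      using diag_right[OF c(2) c(1) d(1) rc] rc assms by (auto simp: dj_def)
  qed (use c in auto)
  ultimately show ?thesis using c d inv_intro unfolding torus_def GLn_def by blast
qed

lemma diag_nonzero:
  fixes t :: "'k::field mat"
  assumes "t \<in> torus n" "c < n"
  shows "t $$ (c,c) \<noteq> 0"
proof -
  have tc: "t \<in> carrier_mat n n" "invertible_mat t" "diagonal_mat t"
    using assms by (auto simp: torus_def GLn_def)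
  obtain ti where ti: "ti \<in> carrier_mat n n" "ti * t = 1\<^sub>m n" using inv_get tc by metis
  have "(ti * t) $$ (c,c) = ti $$ (c,c) * t $$ (c,c)" using diag_right[OF ti(1) tc(1,3) assms(2) assms(2)] .
  thus ?thesis using ti assms by auto
qed

lemma w_entry: "r < n \<Longrightarrow> c < n \<Longrightarrow> w_perm n i $$ (r,c) = (if r = swap_idx (i - 1) (n - 1) c then 1 else 0)"
  by (simp add: w_perm_def)

lemma w_carrier[simp]: "w_perm n i \<in> carrier_mat n n" by (simp add: w_perm_def)

lemma w_sq:
  assumes "1 \<le> i" "i \<le> n"
  shows "w_perm n i * w_perm n i = (1\<^sub>m n :: 'k::field mat)"
proof (rule eq_matI)
  fix r c assume "r < dim_row (1\<^sub>m n :: 'k mat)" "c < dim_col (1\<^sub>m n :: 'k mat)"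
  hence rc: "r < n" "c < n" by auto
  let ?s = "swap_idx (i - 1) (n - 1) c"
  have sn: "?s < n" using rc assms by (auto simp: swap_idx_def)
  have "(w_perm n i * w_perm n i) $$ (r,c) = (\<Sum>k<n. w_perm n i $$ (r,k) * (w_perm n i :: 'k mat) $$ (k,c))"
    using rc by (intro mult_entry) auto
  also have "\<dots> = w_perm n i $$ (r,?s) * (w_perm n i :: 'k mat) $$ (?s,c)"
    using rc sn by (intro sum_single) (auto simp: w_entry)
  also have "\<dots> = (if r = c then 1 else 0)"
    using rc sn by (auto simp: w_entry swap_idx_def)
  finally show "(w_perm n i * w_perm n i) $$ (r,c) = (1\<^sub>m n :: 'k mat) $$ (r,c)" using rc by simp
qed (auto simp: w_perm_def)

lemma u_carrier[simp]: "u_first_row n a \<in> carrier_mat n n" by (simp add: u_first_row_def)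

lemma u_entry: "r < n \<Longrightarrow> c < n \<Longrightarrow> u_first_row n a $$ (r,c) = (if r = c then 1 else 0) + (if r = 0 \<and> 1 \<le> c then a c else 0)"
  by (simp add: u_first_row_def)

lemma mult_u:
  fixes A :: "'k::field mat"
  assumes A: "A \<in> carrier_mat n n" and rc: "r < n" "c < n"
  shows "(A * u_first_row n a) $$ (r,c) = A $$ (r,c) + (if 1 \<le> c then A $$ (r,0) * a c else 0)"
proof -
  have "(A * u_first_row n a) $$ (r,c) = (\<Sum>k<n. A $$ (r,k) * u_first_row n a $$ (k,c))"
    using assms by (intro mult_entry) auto
  also have "\<dots> = (\<Sum>k<n. A $$ (r,k) * (if k = c then 1 else 0)) + (\<Sum>k<n. A $$ (r,k) * (if k = 0 \<and> 1 \<le> c then a c else 0))"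
    unfolding sum.distrib[symmetric] by (intro sum.cong refl) (use rc in \<open>auto simp: u_entry distrib_left\<close>)
  also have "(\<Sum>k<n. A $$ (r,k) * (if k = c then 1 else 0)) = A $$ (r,c) * (if c = c then 1 else 0)"
    using rc by (intro sum_single) auto
  also have "(\<Sum>k<n. A $$ (r,k) * (if k = 0 \<and> 1 \<le> c then a c else 0)) = A $$ (r,0) * (if 1 \<le> c then a c else 0)"
    using rc sum_single[of "{..<n}" 0 "\<lambda>k. A $$ (r,k) * (if k = 0 \<and> 1 \<le> c then a c else 0)"] by auto
  finally show ?thesis by simp
qed

lemma u_inv:
  "u_first_row n a * u_first_row n (\<lambda>c. - a c) = (1\<^sub>m n :: 'k::field mat)"
proof (rule eq_matI)
  fix r c assume "r < dim_row (1\<^sub>m n :: 'k mat)" "c < dim_col (1\<^sub>m n :: 'k mat)"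
  hence rc: "r < n" "c < n" by auto
  show "(u_first_row n a * u_first_row n (\<lambda>c. - a c)) $$ (r,c) = (1\<^sub>m n :: 'k mat) $$ (r,c)"
    using mult_u[OF u_carrier[of n a] rc, of "\<lambda>c. - a c"] rc u_entry[of r n 0 a] by (auto simp: u_entry)
qed (auto simp: u_first_row_def)



lemma entry_col0_upper:
  fixes A b :: "'k::field mat"
  assumes "A \<in> carrier_mat n n" "b \<in> carrier_mat n n" "upper_triangular b" "r < n" "0 < n"
  shows "(A * b) $$ (r,0) = A $$ (r,0) * b $$ (0,0)"
proof -
  have "(A * b) $$ (r,0) = (\<Sum>k<n. A $$ (r,k) * b $$ (k,0))" using assms by (intro mult_entry) auto
  also have "\<dots> = A $$ (r,0) * b $$ (0,0)"
    using assms by (intro sum_single) (auto simp: upper_triangular_def)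
  finally show ?thesis .
qed

lemma part1:
  fixes g :: "'k::field mat set"
  assumes i: "i \<in> {2..n}" and g: "g \<in> X_cell n i" and t: "t \<in> torus_j n 1"
  shows "t \<in> stab_T n g"
proof -
  obtain b where b: "b \<in> borel n" "g = lcoset n (b * w_perm n i)" using g by (auto simp: X_cell_def)
  obtain s where s: "s \<noteq> 0" "t = dj n 1 s" using t by (auto simp: torus_j_dj)
  have bc: "b \<in> carrier_mat n n" "invertible_mat b" "upper_triangular b"
    using b by (auto simp: borel_def GLn_def)
  have n0: "0 < n" "0 < i" using i by auto
  let ?w = "w_perm n i :: 'k mat"
  have ww: "?w * ?w = 1\<^sub>m n" by (rule w_sq) (use i in auto)
  have wi: "invertible_mat ?w" using inv_intro[OF w_carrier w_carrier ww ww] .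
  have Gc: "b * ?w \<in> carrier_mat n n" using bc by simp
  have Gi: "invertible_mat (b * ?w)" using inv_mult[OF bc(1) w_carrier bc(2) wi] .
  obtain gi where gi: "gi \<in> carrier_mat n n" "b * ?w * gi = 1\<^sub>m n" "gi * (b * ?w) = 1\<^sub>m n"
    using inv_get[OF Gi Gc] by metis
  have gib: "gi * b = ?w"
  proof -
    have gbc: "gi * b \<in> carrier_mat n n" using gi bc by simp
    have "gi * b = gi * b * (?w * ?w)" using ww right_mult_one_mat[OF gbc] by simp
    also have "\<dots> = gi * b * ?w * ?w" using massoc[OF gbc w_carrier w_carrier] by simp
    also have "gi * b * ?w = gi * (b * ?w)" using massoc[OF gi(1) bc(1) w_carrier] .
    finally show ?thesis using gi(3) left_mult_one_mat[OF w_carrier] by simp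
  qed
  have b00: "b $$ (0,0) \<noteq> 0"
  proof -
    obtain bi where bi: "bi \<in> carrier_mat n n" "bi * b = 1\<^sub>m n" using inv_get[OF bc(2,1)] by metis
    have "(bi * b) $$ (0,0) = bi $$ (0,0) * b $$ (0,0)"
      using entry_col0_upper[OF bi(1) bc(1) bc(3) n0(1) n0(1)] .
    thus ?thesis using bi n0 by auto
  qed
  have "(gi * b) $$ (n-1,0) = gi $$ (n-1,0) * b $$ (0,0)"
    using entry_col0_upper[OF gi(1) bc(1) bc(3) _ n0(1)] n0 by simp
  moreover have "?w $$ (n-1,0) = 0" using w_entry[of "n-1" n 0 i] i by (auto simp: swap_idx_def)
  ultimately have gz: "gi $$ (n-1,0) = 0" using gib b00 by simp
  have tt: "t \<in> torus n" using s dj_torus by simp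
  have "\<forall>c<n. gi $$ (n-1,c) * t $$ (c,c) = gi $$ (n-1,c)"
    using gz s by (auto simp: dj_def)
  hence "act t g = g" using key[OF Gc gi(1) gi(2) gi(3) tt] b(2) by simp
  thus ?thesis using tt by (simp add: stab_T_def)
qed



lemma gen_inv:
  fixes A :: "'k::field mat"
  assumes A: "A \<in> carrier_mat n n" "invertible_mat A" and i: "1 \<le> i" "i \<le> n"
  obtains gi where "gi \<in> carrier_mat n n" "A * w_perm n i * gi = 1\<^sub>m n"
    "gi * (A * w_perm n i) = 1\<^sub>m n" "gi * A = w_perm n i"
proof -
  let ?w = "w_perm n i :: 'k mat"
  have ww: "?w * ?w = 1\<^sub>m n" by (rule w_sq) (use i in auto)
  have wi: "invertible_mat ?w" using inv_intro[OF w_carrier w_carrier ww ww] .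
  have Gc: "A * ?w \<in> carrier_mat n n" using A by simp
  have Gi: "invertible_mat (A * ?w)" using inv_mult[OF A(1) w_carrier A(2) wi] .
  obtain gi where gi: "gi \<in> carrier_mat n n" "A * ?w * gi = 1\<^sub>m n" "gi * (A * ?w) = 1\<^sub>m n"
    using inv_get[OF Gi Gc] by metis
  have gib: "gi * A = ?w"
  proof -
    have gbc: "gi * A \<in> carrier_mat n n" using gi A by simp
    have "gi * A = gi * A * (?w * ?w)" using ww right_mult_one_mat[OF gbc] by simp
    also have "\<dots> = gi * A * ?w * ?w" using massoc[OF gbc w_carrier w_carrier] by simp
    also have "gi * A * ?w = gi * (A * ?w)" using massoc[OF gi(1) A(1) w_carrier] .
    finally show ?thesis using gi(3) left_mult_one_mat[OF w_carrier] by simp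
  qed
  show ?thesis using that gi gib by blast
qed

lemma u_invertible: "invertible_mat (u_first_row n a :: 'k::field mat)"
proof -
  have "u_first_row n (\<lambda>c. - a c) * u_first_row n (\<lambda>c. - (- a c)) = (1\<^sub>m n :: 'k mat)" by (rule u_inv)
  hence 2: "u_first_row n (\<lambda>c. - a c) * u_first_row n a = (1\<^sub>m n :: 'k mat)" by simp
  show ?thesis using inv_intro[OF u_carrier u_carrier u_inv 2] .
qed

lemma w1_last: "c < n \<Longrightarrow> w_perm n 1 $$ (n-1,c) = (if c = 0 then 1 else 0)"
  by (auto simp: w_entry swap_idx_def)

lemma part2:
  fixes g :: "'k::field mat set"
  assumes j: "j \<in> {2..n}" and g: "g \<in> X1j n j" and t: "t \<in> torus_j n j"
  shows "t \<in> stab_T n g"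
proof -
  obtain t0 a where ta: "t0 \<in> torus n" "a (j - 1) = 0"
    "g = lcoset n (t0 * u_first_row n a * w_perm n 1)" using g by (auto simp: X1j_def)
  obtain s where s: "s \<noteq> 0" "t = dj n j s" using t by (auto simp: torus_j_dj)
  have t0c: "t0 \<in> carrier_mat n n" "invertible_mat t0" "diagonal_mat t0"
    using ta by (auto simp: torus_def GLn_def)
  have n1: "1 \<le> n" using j by auto
  have Ac: "t0 * u_first_row n a \<in> carrier_mat n n" using t0c by simp
  have Ai: "invertible_mat (t0 * u_first_row n a)" using inv_mult[OF t0c(1) u_carrier t0c(2) u_invertible] .
  obtain gi where gi: "gi \<in> carrier_mat n n" "t0 * u_first_row n a * w_perm n 1 * gi = 1\<^sub>m n"
    "gi * (t0 * u_first_row n a * w_perm n 1) = 1\<^sub>m n" "gi * (t0 * u_first_row n a) = w_perm n 1"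
    using gen_inv[OF Ac Ai _ n1] by auto
  let ?c = "j - 1"
  have c: "?c < n" "1 \<le> ?c" using j by auto
  have gt: "gi * t0 \<in> carrier_mat n n" using gi t0c by simp
  have "gi * (t0 * u_first_row n a) = gi * t0 * u_first_row n a" using massoc[OF gi(1) t0c(1) u_carrier] by simp
  moreover have "w_perm n 1 $$ (n-1,?c) = (0::'k)" using w1_last[of ?c n] c by (auto split: if_split_asm)
  ultimately have "(gi * t0 * u_first_row n a) $$ (n-1,?c) = 0" using gi(4) by simp
  moreover have "(gi * t0 * u_first_row n a) $$ (n-1,?c) = (gi * t0) $$ (n-1,?c)"
    using mult_u[OF gt _ c(1), of "n-1" a] c ta(2) by simp
  moreover have "(gi * t0) $$ (n-1,?c) = gi $$ (n-1,?c) * t0 $$ (?c,?c)"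
    using diag_right[OF gi(1) t0c(1) t0c(3) _ c(1), of "n-1"] c by simp
  ultimately have gz: "gi $$ (n-1,?c) = 0" using diag_nonzero[OF ta(1) c(1)] by simp
  have tt: "t \<in> torus n" using s dj_torus by simp
  have "\<forall>c<n. gi $$ (n-1,c) * t $$ (c,c) = gi $$ (n-1,c)"
    using gz s by (auto simp: dj_def)
  hence "act t g = g" using key[OF _ gi(1) gi(2) gi(3) tt] ta(3) Ac by simp
  thus ?thesis using tt by (simp add: stab_T_def)
qed

lemma act_one:
  fixes G :: "'k::field mat"
  assumes "G \<in> carrier_mat n n"
  shows "act (1\<^sub>m n) (lcoset n G) = lcoset n G"
proof -
  have "\<forall>y\<in>lcoset n G. 1\<^sub>m n * y = y" using assms by (auto simp: lcoset_def)
  thus ?thesis unfolding act_def by simp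
qed

lemma part3: "stab_T n (g_ring n :: 'k::field mat set) = {1\<^sub>m n}"
proof -
  let ?u = "u_first_row n (\<lambda>_. 1) :: 'k mat"
  show ?thesis
  proof (cases "n = 0")
    case True
    have "stab_T n (g_ring n :: 'k::field mat set) \<subseteq> {1\<^sub>m n}"
      unfolding stab_T_def torus_def GLn_def using True by auto
    moreover have "1\<^sub>m n \<in> stab_T n (g_ring n :: 'k::field mat set)"
    proof -
      have "(1\<^sub>m n :: 'k mat) \<in> torus n" using inv_intro[of "1\<^sub>m n" n "1\<^sub>m n"]
        by (auto simp: torus_def GLn_def diagonal_mat_def)
      moreover have "act (1\<^sub>m n) (g_ring n) = (g_ring n :: 'k mat set)"
        unfolding g_ring_def by (rule act_one) (rule mult_carrier_mat[OF u_carrier w_carrier])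
      ultimately show ?thesis by (simp add: stab_T_def)
    qed
    ultimately show ?thesis by blast
  next
    case False
    hence n1: "1 \<le> n" by simp
    obtain gi where gi: "gi \<in> carrier_mat n n" "?u * w_perm n 1 * gi = 1\<^sub>m n"
      "gi * (?u * w_perm n 1) = 1\<^sub>m n" "gi * ?u = w_perm n 1"
      using gen_inv[OF u_carrier u_invertible _ n1] by auto
    have Gc: "?u * w_perm n 1 \<in> carrier_mat n n" by (rule mult_carrier_mat[OF u_carrier w_carrier])
    have gnz: "gi $$ (n-1,c) \<noteq> 0" if c: "c < n" for c
    proof -
      have e: "gi $$ (n-1,c') + (if 1 \<le> c' then gi $$ (n-1,0) else 0) = (if c' = 0 then 1 else 0)"
        if "c' < n" for c'
      proof -
        have m: "(gi * ?u) $$ (n-1,c') = gi $$ (n-1,c') + (if 1 \<le> c' then gi $$ (n-1,0) * 1 else 0)"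
          by (rule mult_u) (use gi that in auto)
        have m2: "w_perm n 1 $$ (n-1,c') = gi $$ (n-1,c') + (if 1 \<le> c' then gi $$ (n-1,0) * 1 else 0)"
          using m unfolding gi(4) .
        show ?thesis using m2 unfolding w1_last[OF that] by simp
      qed
      have g0: "gi $$ (n-1,0) = 1" using e[of 0] n1 by simp
      show ?thesis
      proof (cases "c = 0")
        case True thus ?thesis using g0 by simp
      next
        case False
        hence "gi $$ (n-1,c) + 1 = 0" using e[OF c] g0 by simp
        hence "gi $$ (n-1,c) = -1" by (simp add: eq_neg_iff_add_eq_0)
        thus ?thesis by simp
      qed
    qed
    have keyg: "act t (g_ring n) = g_ring n \<longleftrightarrow> (\<forall>c<n. gi $$ (n-1,c) * t $$ (c,c) = gi $$ (n-1,c))"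
      if "t \<in> torus n" for t
      using key[OF Gc gi(1) gi(2) gi(3) that] unfolding g_ring_def .
    have one: "(1\<^sub>m n :: 'k mat) \<in> torus n" using inv_intro[of "1\<^sub>m n" n "1\<^sub>m n"]
      by (auto simp: torus_def GLn_def diagonal_mat_def)
    show ?thesis
    proof
      show "{1\<^sub>m n} \<subseteq> stab_T n (g_ring n :: 'k::field mat set)"
        using keyg[OF one] one by (auto simp: stab_T_def)
      show "stab_T n (g_ring n :: 'k::field mat set) \<subseteq> {1\<^sub>m n}"
      proof
        fix t assume "t \<in> stab_T n (g_ring n :: 'k::field mat set)"
        hence tt: "t \<in> torus n" "act t (g_ring n) = g_ring n" by (auto simp: stab_T_def)
        have tc: "t \<in> carrier_mat n n" "diagonal_mat t" using tt by (auto simp: torus_def GLn_def)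
        have d1: "t $$ (c,c) = 1" if "c < n" for c
        proof -
          have "gi $$ (n-1,c) * t $$ (c,c) = gi $$ (n-1,c) * 1" using keyg[OF tt(1)] tt(2) that by simp
          thus ?thesis using gnz[OF that] by (metis mult_left_cancel)
        qed
        have "t = 1\<^sub>m n"
          by (rule eq_matI) (use tc d1 in \<open>auto simp: diagonal_mat_def\<close>)
        thus "t \<in> {1\<^sub>m n}" by simp
      qed
    qed
  qed
qed


theorem lemma8p2:
  fixes n :: nat
  shows "(\<forall>i\<in>{2..n}. \<forall>g\<in>(X_cell n i :: 'k::field mat set set). torus_j n 1 \<subseteq> stab_T n g)
       \<and> (\<forall>j\<in>{2..n}. \<forall>g\<in>(X1j n j :: 'k::field mat set set). torus_j n j \<subseteq> stab_T n g)
       \<and> stab_T n (g_ring n :: 'k::field mat set) = {1\<^sub>m n}"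
  using part1 part2 part3 by blast

end
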